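(* Let $n\ge 1$, $\ell=2n^2-1$, and let $S_1,\dots,S_\ell$ be pairwise disjoint finite sets with $|S_i|\le n^2$ for every $i$. Then there is an injective map $\phi$ from $S_1\cup\dots\cup S_\ell$ to the set of $2$-element subsets of $\{1,\dots,2n^2\}$ such that for every $i$ and all distinct $s,s'\in S_i$, the sets $\phi(s)$ and $\phi(s')$ are disjoint. *)

theory Defs
  imports Main
begin

end

theory Submission
  imports Defs
begin


definition E :: "int \<Rightarrow> int \<Rightarrow> int \<Rightarrow> int \<Rightarrow> int set" where
"E q m c k = (if k = 0 then {(c*m) mod q, q}
   else {((c*m) mod q + k) mod q, ((c*m) mod q - k) mod q})"

lemma dvd_small: assumes "0 < (q::int)" "q dvd x" "\<bar>x\<bar> < q" shows "x = 0"
proof (rule ccontr)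
  assume "x \<noteq> 0"
  hence "\<bar>q\<bar> \<le> \<bar>x\<bar>" using dvd_imp_le_int assms(2) by blast
  thus False using assms(1,3) by linarith
qed

lemma twoh: assumes "2*m = q+1" "0 \<le> c" "c < (q::int)"
  shows "(2*((c*m) mod q)) mod q = c"
proof -
  have "(2*((c*m) mod q)) mod q = (2*(c*m)) mod q"
    by (rule mod_mult_right_eq)
  also have "2*(c*m) = c*(2*m)" by (simp only: mult_ac)
  also have "\<dots> = c*(q+1)" using assms(1) by simp
  also have "\<dots> = c + c*q" by (simp add: algebra_simps)
  also have "(c + c*q) mod q = c mod q" by (rule mod_mult_self1)
  also have "\<dots> = c" using assms by (simp add: mod_pos_pos_trivial)
  finally show ?thesis .
qed

lemma diff_mod: assumes "0 < (q::int)" "\<bar>a - b\<bar> < q" "a \<noteq> b"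
  shows "(h + a) mod q \<noteq> (h + b) mod q"
proof
  assume "(h + a) mod q = (h + b) mod q"
  hence "q dvd ((h + a) - (h + b))" by (simp only: mod_eq_dvd_iff)
  moreover have "(h + a) - (h + b) = a - b" by simp
  ultimately have "q dvd (a - b)" by simp
  hence "a - b = 0" using dvd_small assms by blast
  thus False using assms by simp
qed

lemma E_sub: assumes "2*m = q+1" "m \<ge> 1" "0 \<le> k" "k < m"
  shows "E q m c k \<subseteq> {0..q}" "card (E q m c k) = 2"
proof -
  have q0: "0 < q" using assms by linarith
  have lt: "\<And>x. x mod q < q" "\<And>x. 0 \<le> x mod q" using q0 by simp_all
  have inr: "\<And>x. x mod q \<in> {0..q}" using lt less_imp_le by (simp only: atLeastAtMost_iff) blast
  have qq: "q \<in> {0..q}" using q0 by simp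
  show "E q m c k \<subseteq> {0..q}" unfolding E_def by (simp only: insert_subset inr qq if_True if_False empty_subsetI simp_thms split: if_split)
  show "card (E q m c k) = 2"
  proof (cases "k = 0")
    case True
    have "(c*m) mod q \<noteq> q" using lt(1)[of "c*m"] by simp
    then show ?thesis using True unfolding E_def by simp
  next
    case False
    have "((c*m) mod q + k) mod q \<noteq> ((c*m) mod q + (-k)) mod q"
    proof (rule diff_mod[OF q0])
      show "\<bar>k - - k\<bar> < q" using assms by linarith
      show "k \<noteq> - k" using False by linarith
    qed
    hence "((c*m) mod q + k) mod q \<noteq> ((c*m) mod q - k) mod q" by simp
    then show ?thesis using False unfolding E_def by simp
  qed
qed

lemma E_alt: "E q m c k = (\<lambda>a. ((c*m) mod q + a) mod q) ` (if k = 0 then {0} else {k, -k}) \<union> (if k = 0 then {q} else {})"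
proof (cases "k = 0")
  case True
  have "(c*m) mod q mod q = (c*m) mod q" by simp
  then show ?thesis using True unfolding E_def by auto
next
  case False
  then show ?thesis unfolding E_def by simp
qed

lemma E_disj: assumes "2*m = q+1" "m \<ge> 1" "0 \<le> k" "k < m" "0 \<le> k'" "k' < m" "k \<noteq> k'"
  shows "E q m c k \<inter> E q m c k' = {}"
proof -
  have q0: "0 < q" using assms by linarith
  have lt: "\<And>x. x mod q < q" using q0 by simp
  define A where "A k = (if k = 0 then {0} else {k, -k})" for k :: int
  define h where "h = (c*m) mod q"
  have Aeq: "E q m c j = (\<lambda>a. (h + a) mod q) ` A j \<union> (if j = 0 then {q} else {})" for j
    unfolding A_def h_def by (rule E_alt)
  have Ab: "\<bar>a\<bar> \<le> j" if "a \<in> A j" "0 \<le> j" for a j using that unfolding A_def by (auto split: if_splits)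
  have Ane: "a \<noteq> b" if "a \<in> A k" "b \<in> A k'" for a b
    using that assms(3,5,7) unfolding A_def by (auto split: if_splits)
  show ?thesis
  proof (rule ccontr)
    assume "E q m c k \<inter> E q m c k' \<noteq> {}"
    then obtain x where x1: "x \<in> E q m c k" and x2: "x \<in> E q m c k'" by blast
    show False
    proof (cases "x = q")
      case True
      have "x \<notin> (\<lambda>a. (h + a) mod q) ` A j" for j
      proof
        assume "x \<in> (\<lambda>a. (h + a) mod q) ` A j"
        then obtain a where "x = (h + a) mod q" by blast
        thus False using lt[of "h+a"] True by simp
      qed
      hence "k = 0" "k' = 0" using x1 x2 unfolding Aeq by (auto split: if_splits)
      thus False using assms(7) by simp
    next
      case False
      obtain a where a: "a \<in> A k" "x = (h + a) mod q" using x1 False unfolding Aeq by (auto split: if_splits)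
      obtain b where b: "b \<in> A k'" "x = (h + b) mod q" using x2 False unfolding Aeq by (auto split: if_splits)
      have "\<bar>a\<bar> \<le> k" "\<bar>b\<bar> \<le> k'" using Ab a(1) b(1) assms by auto
      hence "\<bar>a - b\<bar> < q" using assms by linarith
      hence "(h + a) mod q \<noteq> (h + b) mod q" using diff_mod[OF q0] Ane[OF a(1) b(1)] by blast
      thus False using a b by simp
    qed
  qed
qed

lemma q_notin: assumes "0 < q" "k \<noteq> 0" shows "q \<notin> E q m c k"
proof
  assume "q \<in> E q m c k"
  hence "q = ((c*m) mod q + k) mod q \<or> q = ((c*m) mod q - k) mod q" using assms(2) unfolding E_def by simp
  thus False using pos_mod_bound[OF assms(1), of "(c*m) mod q + k"] pos_mod_bound[OF assms(1), of "(c*m) mod q - k"]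
    by linarith
qed

lemma E_inj: assumes "2*m = q+1" "m \<ge> 1" "0 \<le> k" "k < m" "0 \<le> k'" "k' < m"
  "0 \<le> c" "c < q" "0 \<le> c'" "c' < q" "E q m c k = E q m c' k'"
  shows "c = c' \<and> k = k'"
proof -
  have q0: "0 < q" using assms by linarith
  define h where "h = (c*m) mod q"
  define h' where "h' = (c'*m) mod q"
  have hq: "h < q" "h' < q" unfolding h_def h'_def using q0 by simp_all
  have tc: "(2*h) mod q = c" using twoh[OF assms(1,7,8)] unfolding h_def .
  have tc': "(2*h') mod q = c'" using twoh[OF assms(1,9,10)] unfolding h'_def .
  have cc: "c = c'"
  proof (cases "k = 0")
    case True
    have "q \<in> E q m c k" using True unfolding E_def by simp
    hence k': "k' = 0" using q_notin[OF q0] assms(11) by blast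
    have "h \<in> E q m c k" using True unfolding E_def h_def by simp
    hence "h \<in> E q m c' k'" using assms(11) by simp
    moreover have "E q m c' k' = {h', q}" using k' unfolding E_def h'_def by simp
    ultimately have "h \<in> {h', q}" by simp
    hence "h = h' \<or> h = q" by simp
    hence "h = h'" using hq by linarith
    thus ?thesis using tc tc' by simp
  next
    case False
    have "q \<notin> E q m c k" using q_notin[OF q0 False] .
    have k': "k' \<noteq> 0"
    proof
      assume "k' = 0"
      hence "q \<in> E q m c' k'" unfolding E_def by simp
      thus False using \<open>q \<notin> E q m c k\<close> assms(11) by simp
    qed
    define a where "a = (h + k) mod q"
    define b where "b = (h - k) mod q"
    define a' where "a' = (h' + k') mod q"
    define b' where "b' = (h' - k') mod q"
    have "{a, b} = {a', b'}" using assms(11) False k' unfolding E_def a_def b_def a'_def b'_def h_def h'_def by simp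
    hence "(a = a' \<and> b = b') \<or> (a = b' \<and> b = a')" by (simp only: doubleton_eq_iff)
    hence "a + b = a' + b'" by (elim disjE) simp_all
    hence "(a + b) mod q = (a' + b') mod q" by (rule arg_cong)
    moreover have "(a + b) mod q = (2*h) mod q"
    proof -
      have "(a + b) mod q = ((h+k) + (h-k)) mod q" unfolding a_def b_def by (rule mod_add_eq)
      also have "(h+k) + (h-k) = 2*h" by simp
      finally show ?thesis .
    qed
    moreover have "(a' + b') mod q = (2*h') mod q"
    proof -
      have "(a' + b') mod q = ((h'+k') + (h'-k')) mod q" unfolding a'_def b'_def by (rule mod_add_eq)
      also have "(h'+k') + (h'-k') = 2*h'" by simp
      finally show ?thesis .
    qed
    ultimately have "(2*h) mod q = (2*h') mod q" by simp
    thus ?thesis using tc tc' by simp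
  qed
  moreover have "k = k'"
  proof (rule ccontr)
    assume "k \<noteq> k'"
    hence "E q m c k \<inter> E q m c k' = {}" using E_disj assms by blast
    moreover have "E q m c k \<inter> E q m c k' = E q m c k" using assms cc by simp
    moreover have "card (E q m c k) = 2" using E_sub assms by blast
    ultimately show False by simp
  qed
  ultimately show ?thesis by simp
qed

lemma fin_bij: "finite A \<Longrightarrow> \<exists>g. bij_betw g A {0..<card A}"
  using ex_bij_betw_finite_nat by blast

theorem mainTheorem12:
  fixes n :: nat and S :: "nat \<Rightarrow> 'a set"
  assumes "n \<ge> 1"
    and "\<And>i. i \<in> {1..2*n^2-1} \<Longrightarrow> finite (S i)"
    and "\<And>i. i \<in> {1..2*n^2-1} \<Longrightarrow> card (S i) \<le> n^2"
    and "\<And>i j. i \<in> {1..2*n^2-1} \<Longrightarrow> j \<in> {1..2*n^2-1} \<Longrightarrow> i \<noteq> j \<Longrightarrow> S i \<inter> S j = {}"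
  shows "\<exists>\<phi> :: 'a \<Rightarrow> nat set.
           inj_on \<phi> (\<Union>i\<in>{1..2*n^2-1}. S i)
         \<and> \<phi> ` (\<Union>i\<in>{1..2*n^2-1}. S i) \<subseteq> {P. P \<subseteq> {1..2*n^2} \<and> card P = 2}
         \<and> (\<forall>i\<in>{1..2*n^2-1}. \<forall>s\<in>S i. \<forall>s'\<in>S i. s \<noteq> s' \<longrightarrow> \<phi> s \<inter> \<phi> s' = {})"
proof -
  define I where "I = {1..2*n^2-1}"
  define m :: int where "m = int (n^2)"
  define q :: int where "q = int (2*n^2-1)"
  have n2: "n^2 \<ge> 1" using assms(1) by simp
  have m1: "m \<ge> 1" using n2 unfolding m_def by linarith
  have mq: "2*m = q + 1" unfolding m_def q_def using n2 by (simp add: of_nat_diff)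
  define g where "g i = (SOME g. bij_betw g (S i) {0..<card (S i)})" for i
  have gb: "bij_betw (g i) (S i) {0..<card (S i)}" if "i \<in> I" for i
  proof -
    have "\<exists>g. bij_betw g (S i) {0..<card (S i)}" using fin_bij assms(2) that unfolding I_def by blast
    thus ?thesis unfolding g_def by (rule someI_ex)
  qed
  define cls where "cls s = (THE i. i \<in> I \<and> s \<in> S i)" for s
  have clsI: "cls s = i" if "i \<in> I" "s \<in> S i" for i s
    unfolding cls_def
  proof (rule the_equality)
    show "i \<in> I \<and> s \<in> S i" using that by simp
    fix j assume j: "j \<in> I \<and> s \<in> S j"
    show "j = i"
    proof (rule ccontr)
      assume "j \<noteq> i"
      hence "S j \<inter> S i = {}" using assms(4) j that unfolding I_def by blast
      thus False using j that by blast
    qed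
  qed
  define f :: "int \<Rightarrow> nat" where "f x = nat x + 1" for x
  have finj: "inj_on f {0..}"
  proof (rule inj_onI)
    fix x y :: int assume "x \<in> {0..}" "y \<in> {0..}" "f x = f y"
    thus "x = y" unfolding f_def by simp
  qed
  define C where "C s = int (cls s) - 1" for s
  define K where "K s = int (g (cls s) s)" for s
  define \<phi> where "\<phi> s = f ` E q m (C s) (K s)" for s
  have facts: "0 \<le> C s \<and> C s < q \<and> 0 \<le> K s \<and> K s < m" if "i \<in> I" "s \<in> S i" for i s
  proof -
    have ci: "cls s = i" using clsI that by blast
    have "g i s \<in> {0..<card (S i)}" using gb[OF that(1)] that(2) bij_betwE by blast
    hence "g i s < card (S i)" by simp
    moreover have "card (S i) \<le> n^2" using assms(3) that unfolding I_def by blast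
    ultimately have "int (g i s) < m" unfolding m_def by linarith
    moreover have "1 \<le> i" "i \<le> 2*n^2-1" using that unfolding I_def by auto
    ultimately show ?thesis unfolding C_def K_def ci q_def by linarith
  qed
  have Esub: "E q m (C s) (K s) \<subseteq> {0..}" if "i \<in> I" "s \<in> S i" for i s
  proof -
    have "E q m (C s) (K s) \<subseteq> {0..q}" using E_sub(1)[OF mq m1] facts[OF that] by blast
    thus ?thesis by auto
  qed
  show ?thesis
  proof (intro exI[of _ \<phi>] conjI)
    show "inj_on \<phi> (\<Union>i\<in>{1..2*n^2-1}. S i)"
    proof (rule inj_onI)
      fix s s' assume s: "s \<in> (\<Union>i\<in>{1..2*n^2-1}. S i)" and s': "s' \<in> (\<Union>i\<in>{1..2*n^2-1}. S i)"
        and eq: "\<phi> s = \<phi> s'"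
      obtain i where i: "i \<in> I" "s \<in> S i" using s unfolding I_def by blast
      obtain i' where i': "i' \<in> I" "s' \<in> S i'" using s' unfolding I_def by blast
      have Eeq: "E q m (C s) (K s) = E q m (C s') (K s')"
        using eq unfolding \<phi>_def using inj_on_image_eq_iff[OF finj Esub[OF i] Esub[OF i']] by blast
      note F = facts[OF i] and F' = facts[OF i']
      have ck: "C s = C s' \<and> K s = K s'"
        using E_inj[OF mq m1 conjunct1[OF conjunct2[OF conjunct2[OF F]]] conjunct2[OF conjunct2[OF conjunct2[OF F]]]
          conjunct1[OF conjunct2[OF conjunct2[OF F']]] conjunct2[OF conjunct2[OF conjunct2[OF F']]]
          conjunct1[OF F] conjunct1[OF conjunct2[OF F]] conjunct1[OF F'] conjunct1[OF conjunct2[OF F']] Eeq] .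
      hence "cls s = cls s'" unfolding C_def by simp
      hence ii: "i = i'" using clsI[OF i] clsI[OF i'] by simp
      have "g i s = g i s'" using ck clsI[OF i] clsI[OF i'] ii unfolding K_def by simp
      moreover have "inj_on (g i) (S i)" using gb[OF i(1)] by (rule bij_betw_imp_inj_on)
      ultimately show "s = s'" using inj_onD[of "g i" "S i" s s'] i(2) i'(2) ii by simp
    qed
    show "\<phi> ` (\<Union>i\<in>{1..2*n^2-1}. S i) \<subseteq> {P. P \<subseteq> {1..2*n^2} \<and> card P = 2}"
    proof
      fix P assume "P \<in> \<phi> ` (\<Union>i\<in>{1..2*n^2-1}. S i)"
      then obtain i s where i: "i \<in> I" "s \<in> S i" and P: "P = \<phi> s" unfolding I_def by blast
      have sub: "E q m (C s) (K s) \<subseteq> {0..q}" and cd: "card (E q m (C s) (K s)) = 2"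
        using E_sub[OF mq m1, of "K s" "C s"] facts[OF i] by auto
      have "card P = 2" unfolding P \<phi>_def
        using card_image[OF inj_on_subset[OF finj Esub[OF i]]] cd by simp
      moreover have "P \<subseteq> {1..2*n^2}"
      proof
        fix y assume "y \<in> P"
        then obtain x where x: "x \<in> E q m (C s) (K s)" "y = f x" unfolding P \<phi>_def by blast
        have "0 \<le> x" "x \<le> q" using sub x(1) by auto
        hence "nat x \<le> 2*n^2-1" unfolding q_def by linarith
        hence "nat x + 1 \<le> 2*n^2" using n2 by linarith
        thus "y \<in> {1..2*n^2}" unfolding x(2) f_def by simp
      qed
      ultimately show "P \<in> {P. P \<subseteq> {1..2*n^2} \<and> card P = 2}" by simp
    qed
    show "\<forall>i\<in>{1..2*n^2-1}. \<forall>s\<in>S i. \<forall>s'\<in>S i. s \<noteq> s' \<longrightarrow> \<phi> s \<inter> \<phi> s' = {}"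
    proof (intro ballI impI)
      fix i s s' assume i: "i \<in> {1..2*n^2-1}" and s: "s \<in> S i" and s': "s' \<in> S i" and ne: "s \<noteq> s'"
      have iI: "i \<in> I" using i unfolding I_def by simp
      have c: "cls s = i" "cls s' = i" using clsI iI s s' by auto
      have "inj_on (g i) (S i)" using gb[OF iI] by (rule bij_betw_imp_inj_on)
      hence "g i s \<noteq> g i s'" using s s' ne inj_onD[of "g i" "S i" s s'] by auto
      hence kne: "K s \<noteq> K s'" unfolding K_def c by simp
      have Ceq: "C s' = C s" unfolding C_def c by simp
      note F = facts[OF iI s] and F' = facts[OF iI s']
      have "E q m (C s) (K s) \<inter> E q m (C s) (K s') = {}"
        using E_disj[OF mq m1 conjunct1[OF conjunct2[OF conjunct2[OF F]]] conjunct2[OF conjunct2[OF conjunct2[OF F]]]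
          conjunct1[OF conjunct2[OF conjunct2[OF F']]] conjunct2[OF conjunct2[OF conjunct2[OF F']]] kne] .
      hence "E q m (C s) (K s) \<inter> E q m (C s') (K s') = {}" using Ceq by simp
      moreover have "\<phi> s \<inter> \<phi> s' = f ` (E q m (C s) (K s) \<inter> E q m (C s') (K s'))"
        unfolding \<phi>_def using inj_on_image_Int[OF finj Esub[OF iI s] Esub[OF iI s']] by simp
      ultimately show "\<phi> s \<inter> \<phi> s' = {}" by simp
    qed
  qed
qed

end
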